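(* There is an absolute constant $C>0$ such that the following holds for every $n\ge 2$, every connected $n$-node graph $G_0$ and every node $u$. Let $T=\lceil Cn\ln n\rceil$ and run the triangulation process from $G_0$. Then the probability of the event that (for every $t<T$, more than $\delta_0/4$ nodes of $N^1_t(u)$ are strongly tied to $N^2_t(u)$ at round $t$) and $d_T(u)<\tfrac54\delta_0$ is at most $1/n^2$.
   Context: Triangulation process: $G_0$ is a connected simple undirected graph on an $n$-node vertex set $V$. Given $G_t$, in round $t$ every node $x$ independently picks two neighbors $v,w$ of $x$ in $G_t$, independently and uniformly at random, and the edge $\{v,w\}$ is added (nothing happens if $v=w$ or the edge already exists); $G_{t+1}$ is $G_t$ together with all edges added in round $t$. Edges are never removed. Notation: $d_t(x)$ is the degree of $x$ in $G_t$; $\delta_t$ is the minimum degree of $G_t$; $N^i_t(x)$ is the set of nodes at distance exactly $i$ from $x$ in $G_t$; for a set $S$, $d_t(x,S)$ is the number of neighbors of $x$ in $G_t$ lying in $S$. A node $x$ is strongly tied to a set $S$ at round $t$ if $d_t(x,S)\ge \delta_0/2$, and weakly tied to $S$ at round $t$ if $d_t(x,S)<\delta_0/2$. *)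

theory Defs
  imports "HOL-Probability.Probability"
begin

definition simple_graph :: "nat set \<Rightarrow> nat set set \<Rightarrow> bool" where
  "simple_graph V E \<longleftrightarrow> finite V \<and> (\<forall>e\<in>E. \<exists>a b. e = {a, b} \<and> a \<in> V \<and> b \<in> V \<and> a \<noteq> b)"

definition adj :: "nat set set \<Rightarrow> nat \<Rightarrow> nat \<Rightarrow> bool" where
  "adj E x y \<longleftrightarrow> {x, y} \<in> E \<and> x \<noteq> y"

definition connected_graph :: "nat set \<Rightarrow> nat set set \<Rightarrow> bool" where
  "connected_graph V E \<longleftrightarrow> (\<forall>x\<in>V. \<forall>y\<in>V. (adj E)\<^sup>*\<^sup>* x y)"

definition nbrs :: "nat set set \<Rightarrow> nat \<Rightarrow> nat set" where
  "nbrs E x = {y. adj E x y}"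

definition deg :: "nat set set \<Rightarrow> nat \<Rightarrow> nat" where
  "deg E x = card (nbrs E x)"

definition min_deg :: "nat set \<Rightarrow> nat set set \<Rightarrow> nat" where
  "min_deg V E = Min (deg E ` V)"

text \<open>N^i(x): nodes at distance exactly i from x (shortest walk has length i).\<close>
definition Nset :: "nat set set \<Rightarrow> nat \<Rightarrow> nat \<Rightarrow> nat set" where
  "Nset E x i = {y. (adj E ^^ i) x y \<and> (\<forall>j<i. \<not> (adj E ^^ j) x y)}"

definition deg_in :: "nat set set \<Rightarrow> nat \<Rightarrow> nat set \<Rightarrow> nat" where
  "deg_in E x S = card (nbrs E x \<inter> S)"

text \<open>One round: each node x in V independently picks an ordered pair (v,w) of
  neighbours, independently and uniformly (i.e. uniform on N(x) x N(x));
  the edge {v,w} is added if v \<noteq> w.  (Isolated nodes pick (x,x), adding nothing.)\<close>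
definition choice_pmf :: "nat set set \<Rightarrow> nat \<Rightarrow> (nat \<times> nat) pmf" where
  "choice_pmf E x = (if nbrs E x = {} then return_pmf (x, x)
                     else pmf_of_set (nbrs E x \<times> nbrs E x))"

definition tri_step :: "nat set \<Rightarrow> nat set set \<Rightarrow> nat set set pmf" where
  "tri_step V E = map_pmf
     (\<lambda>c. E \<union> {{fst (c x), snd (c x)} | x. x \<in> V \<and> fst (c x) \<noteq> snd (c x)})
     (Pi_pmf V undefined (choice_pmf E))"

text \<open>Distribution of the trajectory [G_0, ..., G_t] (a list of length t+1).\<close>
fun tri_traj :: "nat set \<Rightarrow> nat set set \<Rightarrow> nat \<Rightarrow> nat set set list pmf" where
  "tri_traj V E0 0 = return_pmf [E0]"
| "tri_traj V E0 (Suc t) =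
     bind_pmf (tri_traj V E0 t) (\<lambda>gs. map_pmf (\<lambda>H. gs @ [H]) (tri_step V (last gs)))"

end

theory Submission imports Defs begin

lemma adj_sym: "adj E x y = adj E y x"
  by (auto simp: adj_def insert_commute)

lemma nbrs_sub: "simple_graph V G \<Longrightarrow> nbrs G x \<subseteq> V"
  unfolding simple_graph_def nbrs_def adj_def by fastforce

lemma nbrs_finite: "simple_graph V G \<Longrightarrow> finite (nbrs G x)"
  using nbrs_sub simple_graph_def finite_subset by metis

lemma Nset1: "Nset G u 1 = nbrs G u"
  by (auto simp: Nset_def nbrs_def adj_def)

lemma Nset2_iff: "w \<in> Nset G u 2 \<longleftrightarrow> (\<exists>z. adj G u z \<and> adj G z w) \<and> w \<noteq> u \<and> \<not> adj G u w"
proof -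
  have a: "(adj G ^^ 2) u w = (\<exists>z. adj G u z \<and> adj G z w)" by (auto simp: numeral_2_eq_2 relcompp_apply)
  have b: "(\<forall>j<2. \<not> (adj G ^^ j) u w) = (u \<noteq> w \<and> \<not> adj G u w)"
    by (auto simp: numeral_2_eq_2 less_Suc_eq)
  show ?thesis unfolding Nset_def using a b by auto
qed

lemma nbrs_mono: "G \<subseteq> H \<Longrightarrow> nbrs G x \<subseteq> nbrs H x"
  by (auto simp: nbrs_def adj_def)

lemma deg_mono: "G \<subseteq> H \<Longrightarrow> simple_graph V H \<Longrightarrow> deg G x \<le> deg H x"
  unfolding deg_def by (intro card_mono nbrs_finite nbrs_mono) auto

lemma set_choice: "simple_graph V G \<Longrightarrow> c \<in> set_pmf (choice_pmf G x) \<Longrightarrow> nbrs G x \<noteq> {} \<Longrightarrow> c \<in> nbrs G x \<times> nbrs G x"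
  using nbrs_finite[of V G x] by (auto simp: choice_pmf_def)

lemma set_choice2: "simple_graph V G \<Longrightarrow> c \<in> set_pmf (choice_pmf G x) \<Longrightarrow> nbrs G x = {} \<Longrightarrow> c = (x,x)"
  by (auto simp: choice_pmf_def)

lemma step_support:
  assumes V: "finite V" and G: "simple_graph V G" and H: "H \<in> set_pmf (tri_step V G)"
  shows "G \<subseteq> H \<and> simple_graph V H"
proof -
  obtain c where c: "c \<in> set_pmf (Pi_pmf V undefined (choice_pmf G))"
    and Hc: "H = G \<union> {{fst (c x), snd (c x)} | x. x \<in> V \<and> fst (c x) \<noteq> snd (c x)}"
    using H unfolding tri_step_def by auto
  have cx: "c x \<in> set_pmf (choice_pmf G x)" if "x \<in> V" for x
    using c that set_Pi_pmf_subset'[OF V, of undefined "choice_pmf G"] by (auto simp: PiE_dflt_def)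
  have "simple_graph V H"
    unfolding simple_graph_def
  proof (intro conjI ballI)
    show "finite V" by fact
    fix e assume "e \<in> H"
    then consider "e \<in> G" | x where "x \<in> V" "fst (c x) \<noteq> snd (c x)" "e = {fst (c x), snd (c x)}"
      using Hc by auto
    then show "\<exists>a b. e = {a, b} \<and> a \<in> V \<and> b \<in> V \<and> a \<noteq> b"
    proof cases
      case 1 then show ?thesis using G unfolding simple_graph_def by blast
    next
      case 2
      show ?thesis
      proof (cases "nbrs G x = {}")
        case True then show ?thesis using set_choice2[OF G cx[OF 2(1)]] 2 by auto
      next
        case False
        then have "c x \<in> nbrs G x \<times> nbrs G x" using set_choice[OF G cx[OF 2(1)]] by auto
        then show ?thesis using nbrs_sub[OF G, of x] 2 by (cases "c x") auto
      qed
    qed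
  qed
  then show ?thesis using Hc by auto
qed

lemma traj_support:
  assumes V: "finite V" and G: "simple_graph V E0"
  shows "gs \<in> set_pmf (tri_traj V E0 t) \<Longrightarrow> length gs = Suc t \<and> (\<forall>G\<in>set gs. simple_graph V G)"
proof (induction t arbitrary: gs)
  case 0 then show ?case using G by auto
next
  case (Suc t)
  then obtain hs H where hs: "hs \<in> set_pmf (tri_traj V E0 t)" "H \<in> set_pmf (tri_step V (last hs))" "gs = hs @ [H]"
    by auto
  have "length hs = Suc t" "\<forall>G\<in>set hs. simple_graph V G" using Suc.IH[OF hs(1)] by auto
  moreover have "last hs \<in> set hs" using calculation(1) by (intro last_in_set) auto
  ultimately have "simple_graph V H" using step_support[OF V _ hs(2)] by auto
  then show ?case using hs(3) \<open>length hs = Suc t\<close> \<open>\<forall>G\<in>set hs. simple_graph V G\<close> by auto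
qed


lemma q_bound:
  assumes G: "simple_graph V G" and V: "finite V"
    and dn: "\<delta> \<le> real (card V)" and d1: "1 \<le> \<delta>"
    and du: "real (deg G u) < 5/4 * \<delta>"
    and x: "x \<in> nbrs G u" and xs: "real (deg_in G x (Nset G u 2)) \<ge> \<delta> / 2"
  shows "measure_pmf.prob (choice_pmf G x)
           ({u} \<times> (nbrs G x \<inter> Nset G u 2) \<union> (nbrs G x \<inter> Nset G u 2) \<times> {u})
         \<ge> 1 / (4 * real (card V))"
proof -
  define N where "N = nbrs G x"
  define W where "W = nbrs G x \<inter> Nset G u 2"
  define A where "A = {u} \<times> W \<union> W \<times> {u}"
  have fN: "finite N" using nbrs_finite[OF G] N_def by auto
  have uN: "u \<in> N" using x adj_sym unfolding N_def nbrs_def by auto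
  have WN: "W \<subseteq> N" unfolding W_def N_def by auto
  have fW: "finite W" using fN WN finite_subset by auto
  have uW: "u \<notin> W" unfolding W_def using Nset2_iff by auto
  have AN: "A \<subseteq> N \<times> N" using uN WN unfolding A_def by auto
  have cA: "card A = 2 * card W"
  proof -
    have "card A = card ({u} \<times> W) + card (W \<times> {u})"
      unfolding A_def using fW uW by (intro card_Un_disjoint) auto
    then show ?thesis by (simp add: card_cartesian_product)
  qed
  have Nsub: "N \<subseteq> insert u ((nbrs G u - {x}) \<union> W)"
  proof
    fix y assume y: "y \<in> N"
    have "y \<noteq> x" using y unfolding N_def nbrs_def adj_def by auto
    moreover have "adj G x y" using y unfolding N_def nbrs_def by auto
    moreover have "adj G u x" using x unfolding nbrs_def by auto
    ultimately show "y \<in> insert u ((nbrs G u - {x}) \<union> W)"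
    proof (cases "y = u")
      case False
      show ?thesis
      proof (cases "adj G u y")
        case True then show ?thesis using \<open>y \<noteq> x\<close> by (simp add: nbrs_def)
      next
        case False
        then have "y \<in> Nset G u 2" using Nset2_iff[of y G u] \<open>y \<noteq> u\<close> \<open>adj G x y\<close> \<open>adj G u x\<close> by blast
        then show ?thesis using y unfolding W_def N_def by auto
      qed
    qed simp
  qed
  have fnu: "finite (nbrs G u)" using nbrs_finite[OF G] .
  have "card N \<le> card (insert u ((nbrs G u - {x}) \<union> W))"
    using Nsub fnu fW by (intro card_mono) auto
  also have "\<dots> \<le> Suc (card ((nbrs G u - {x}) \<union> W))" by (rule card_insert_le_m1) auto
  also have "\<dots> \<le> Suc (card (nbrs G u - {x}) + card W)" using card_Un_le by auto
  also have "\<dots> = deg G u + card W" using x fnu unfolding deg_def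
    by (simp add: card_Diff_singleton) (metis Suc_pred card_gt_0_iff empty_iff)
  finally have cN: "real (card N) \<le> real (deg G u) + real (card W)" by linarith
  have w1: "real (card W) \<ge> \<delta> / 2" using xs unfolding deg_in_def W_def by simp
  have wn: "real (card W) \<le> real (card V)"
    using card_mono[OF V] WN nbrs_sub[OF G] N_def by (metis order_trans of_nat_le_iff)
  have Npos: "real (card N) > 0" using uN fN by (simp add: card_gt_0_iff) blast
  define w where "w = real (card W)"
  define m where "m = real (card N)"
  define n where "n = real (card V)"
  have h1: "m \<le> 7/2 * w" using cN du w1 unfolding m_def w_def by linarith
  have h2: "m \<le> 9/4 * n" using cN du dn wn unfolding m_def w_def n_def by linarith
  have "m * m \<le> (7/2 * w) * (9/4 * n)"
    using h1 h2 Npos unfolding m_def by (intro mult_mono) auto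
  moreover have "0 \<le> n * w" unfolding n_def w_def by simp
  ultimately have key: "m * m \<le> 8 * n * w" by (simp add: algebra_simps)
  have "measure_pmf.prob (choice_pmf G x) A = real (card A) / real (card (N \<times> N))"
  proof -
    have "nbrs G x \<noteq> {}" using uN N_def by auto
    then have "choice_pmf G x = pmf_of_set (N \<times> N)" unfolding choice_pmf_def N_def by simp
    moreover have "N \<times> N \<noteq> {}" "finite (N \<times> N)" using uN fN by auto
    moreover have "N \<times> N \<inter> A = A" using AN by blast
    ultimately show ?thesis using measure_pmf_of_set[of "N \<times> N" A] by metis
  qed
  also have "\<dots> = 2 * w / (m * m)" unfolding cA w_def m_def by (simp add: card_cartesian_product)
  finally have eq: "measure_pmf.prob (choice_pmf G x) A = 2 * w / (m * m)" .
  have "1 / (4 * n) \<le> 2 * w / (m * m)"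
    using key Npos dn d1 unfolding m_def n_def
    by (simp add: field_simps)
  then show ?thesis using eq unfolding A_def W_def n_def by simp
qed


definition strong :: "real \<Rightarrow> nat \<Rightarrow> nat set set \<Rightarrow> bool" where
  "strong \<delta> u G \<longleftrightarrow> real (card {x \<in> Nset G u 1. real (deg_in G x (Nset G u 2)) \<ge> \<delta> / 2}) > \<delta> / 4"

lemma exp_half: fixes s :: real assumes "0 \<le> s" "s \<le> 1" shows "exp (- s) \<le> 1 - s / 2"
proof -
  have "1 + s \<le> exp s" using exp_ge_add_one_self[of s] by simp
  then have "exp (-s) \<le> 1 / (1 + s)" using assms by (simp add: exp_minus field_simps)
  also have "\<dots> \<le> 1 - s / 2" using assms by (simp add: field_simps) (smt (verit) mult_left_le_one_le)
  finally show ?thesis .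
qed

lemma inc_prob:
  assumes G: "simple_graph V G" and V: "finite V"
    and dn: "\<delta> \<le> real (card V)" and d1: "1 \<le> \<delta>"
    and du: "real (deg G u) < 5/4 * \<delta>"
    and st: "strong \<delta> u G"
  shows "measure_pmf.prob (tri_step V G) {H. deg G u < deg H u} \<ge> \<delta> / (32 * real (card V))"
proof -
  define n where "n = real (card V)"
  have npos: "n > 0" using dn d1 n_def by linarith
  define S where "S = {x \<in> Nset G u 1. real (deg_in G x (Nset G u 2)) \<ge> \<delta> / 2}"
  have SV: "S \<subseteq> V" using nbrs_sub[OF G] unfolding S_def Nset1 by auto
  have fS: "finite S" using SV V finite_subset by auto
  have cS: "real (card S) > \<delta> / 4" using st unfolding strong_def S_def by simp
  define W where "W = (\<lambda>x. nbrs G x \<inter> Nset G u 2)"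
  define A where "A = (\<lambda>x. {u} \<times> W x \<union> W x \<times> {u})"
  define B where "B = (\<lambda>x. if x \<in> S then - A x else UNIV)"
  define P where "P = Pi_pmf V undefined (choice_pmf G)"
  define f where "f = (\<lambda>c. G \<union> {{fst (c x), snd (c x)} | x. x \<in> V \<and> fst (c x) \<noteq> snd (c x)})"
  have qx: "measure_pmf.prob (choice_pmf G x) (A x) \<ge> 1 / (4 * n)" if "x \<in> S" for x
    using q_bound[OF G V dn d1 du, of x] that unfolding S_def A_def W_def n_def Nset1 by auto
  have "measure_pmf.prob P (Pi V B) = (\<Prod>x\<in>V. measure_pmf.prob (choice_pmf G x) (B x))"
    unfolding P_def by (rule measure_Pi_pmf_Pi[OF V])
  also have "\<dots> \<le> (\<Prod>x\<in>V. if x \<in> S then exp (- 1 / (4 * n)) else 1)"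
  proof (rule prod_mono)
    fix x assume "x \<in> V"
    show "0 \<le> measure_pmf.prob (choice_pmf G x) (B x) \<and>
          measure_pmf.prob (choice_pmf G x) (B x) \<le> (if x \<in> S then exp (- 1 / (4 * n)) else 1)"
    proof (cases "x \<in> S")
      case True
      have "measure_pmf.prob (choice_pmf G x) (B x) = 1 - measure_pmf.prob (choice_pmf G x) (A x)"
        using True measure_pmf.prob_compl[of "A x" "choice_pmf G x"] unfolding B_def by (simp add: Compl_eq_Diff_UNIV)
      also have "\<dots> \<le> 1 - 1 / (4 * n)" using qx[OF True] by simp
      also have "\<dots> \<le> exp (- 1 / (4 * n))" using exp_ge_add_one_self[of "- 1 / (4 * n)"] by simp
      finally show ?thesis using True by simp
    qed (auto simp: B_def)
  qed
  also have "\<dots> = exp (- 1 / (4 * n)) ^ card S"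
    using SV V by (simp add: prod.If_cases Int_absorb1 Int_commute) (metis Int_absorb2 Int_def SV mem_Collect_eq)
  also have "\<dots> = exp (real (card S) * (- 1 / (4 * n)))" by (metis exp_of_nat_mult)
  also have "\<dots> \<le> exp (- (\<delta> / (16 * n)))" using cS npos by (simp add: field_simps)
  also have "\<dots> \<le> 1 - \<delta> / (32 * n)"
    using exp_half[of "\<delta> / (16 * n)"] npos d1 dn unfolding n_def by (simp add: field_simps)
  finally have PB: "measure_pmf.prob P (Pi V B) \<le> 1 - \<delta> / (32 * n)" .
  have incl: "(- Pi V B) \<inter> set_pmf P \<subseteq> f -` {H. deg G u < deg H u}"
  proof
    fix c assume c: "c \<in> (- Pi V B) \<inter> set_pmf P"
    then obtain x where x: "x \<in> V" "c x \<notin> B x" by (auto simp: Pi_def)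
    then have xS: "x \<in> S" and cA: "c x \<in> A x" by (auto simp: B_def split: if_splits)
    have H: "f c \<in> set_pmf (tri_step V G)" using c unfolding tri_step_def P_def f_def by auto
    from step_support[OF V G H] have GH: "G \<subseteq> f c" and sH: "simple_graph V (f c)" by auto
    obtain w where w: "w \<in> W x" "c x = (u, w) \<or> c x = (w, u)" using cA unfolding A_def by auto
    have wN2: "w \<noteq> u" "\<not> adj G u w" using w(1) Nset2_iff unfolding W_def by auto
    have ne: "fst (c x) \<noteq> snd (c x)" using w(2) wN2 by auto
    have "{fst (c x), snd (c x)} \<in> f c" using x(1) ne unfolding f_def by blast
    moreover have "{fst (c x), snd (c x)} = {u, w}" using w(2) by (auto simp: insert_commute)
    ultimately have "{u, w} \<in> f c" by simp
    then have "w \<in> nbrs (f c) u" using wN2 by (simp add: nbrs_def adj_def)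
    moreover have "w \<notin> nbrs G u" using wN2 by (simp add: nbrs_def)
    ultimately have "nbrs G u \<subset> nbrs (f c) u" using nbrs_mono[OF GH] by auto
    then show "c \<in> f -` {H. deg G u < deg H u}"
      unfolding deg_def using psubset_card_mono[OF nbrs_finite[OF sH]] by auto
  qed
  have "measure_pmf.prob (tri_step V G) {H. deg G u < deg H u} = measure_pmf.prob P (f -` {H. deg G u < deg H u})"
    unfolding tri_step_def P_def f_def by simp
  also have "\<dots> \<ge> measure_pmf.prob P ((- Pi V B) \<inter> set_pmf P)"
    by (rule measure_pmf.finite_measure_mono[OF incl]) auto
  also have "measure_pmf.prob P ((- Pi V B) \<inter> set_pmf P) = measure_pmf.prob P (- Pi V B)"
    by (rule measure_Int_set_pmf)
  also have "\<dots> = 1 - measure_pmf.prob P (Pi V B)"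
    using measure_pmf.prob_compl[of "Pi V B" P] by (simp add: Compl_eq_Diff_UNIV)
  finally show ?thesis using PB unfolding n_def by linarith
qed


lemma pmf_integrable_bounded:
  fixes f :: "'a \<Rightarrow> real"
  assumes "\<And>x. \<bar>f x\<bar> \<le> B"
  shows "integrable (measure_pmf M) f"
  by (rule measure_pmf.integrable_const_bound[where B=B]) (use assms in auto)

lemma step_expect:
  assumes G: "simple_graph V G" and V: "finite V"
    and dn: "\<delta> \<le> real (card V)" and d1: "1 \<le> \<delta>"
    and du: "real (deg G u) < 5/4 * \<delta>"
    and st: "strong \<delta> u G"
  shows "(\<integral>H. (1/2::real) ^ deg H u \<partial>tri_step V G) \<le> (1/2) ^ deg G u * (1 - \<delta> / (64 * real (card V)))"
proof -
  define d where "d = deg G u"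
  define I where "I = {H. d < deg H u}"
  have pI: "measure_pmf.prob (tri_step V G) I \<ge> \<delta> / (32 * real (card V))"
    using inc_prob[OF G V dn d1 du st] unfolding I_def d_def .
  have pw: "AE H in measure_pmf (tri_step V G). (1/2::real) ^ deg H u \<le> (1/2) ^ d * (1 - indicator I H / 2)"
    unfolding AE_measure_pmf_iff
  proof
    fix H assume H: "H \<in> set_pmf (tri_step V G)"
    from step_support[OF V G H] have "d \<le> deg H u" unfolding d_def using deg_mono by blast
    show "(1/2::real) ^ deg H u \<le> (1/2) ^ d * (1 - indicator I H / 2)"
    proof (cases "H \<in> I")
      case True
      then have "Suc d \<le> deg H u" unfolding I_def by auto
      then have "(1/2::real) ^ deg H u \<le> (1/2) ^ Suc d" by (intro power_decreasing) auto
      then show ?thesis using True by simp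
    next
      case False
      then show ?thesis using \<open>d \<le> deg H u\<close> by (simp add: power_decreasing)
    qed
  qed
  have int1: "integrable (measure_pmf (tri_step V G)) (\<lambda>H. (1/2::real) ^ deg H u)"
    by (rule pmf_integrable_bounded[where B=1]) (simp add: power_le_one)
  have int2: "integrable (measure_pmf (tri_step V G)) (\<lambda>H. (1/2::real) ^ d * (1 - indicator I H / 2))"
    by (rule pmf_integrable_bounded[where B=1]) (auto simp: indicator_def power_le_one intro: order_trans[OF power_le_one])
  have "(\<integral>H. (1/2::real) ^ deg H u \<partial>tri_step V G) \<le> (\<integral>H. (1/2::real) ^ d * (1 - indicator I H / 2) \<partial>tri_step V G)"
    by (rule integral_mono_AE[OF int1 int2 pw])
  also have "\<dots> = (1/2) ^ d * (1 - measure_pmf.prob (tri_step V G) I / 2)"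
  proof -
    have i3: "integrable (measure_pmf (tri_step V G)) (\<lambda>H. indicator I H / (2::real))"
      by (rule pmf_integrable_bounded[where B=1]) (auto simp: indicator_def)
    have "(\<integral>H. (1 - indicator I H / (2::real)) \<partial>tri_step V G) = 1 - measure_pmf.prob (tri_step V G) I / 2"
      using i3 by (simp add: Bochner_Integration.integral_diff)
    then show ?thesis by simp
  qed
  also have "\<dots> \<le> (1/2) ^ d * (1 - \<delta> / (64 * real (card V)))"
    using pI by (intro mult_left_mono) auto
  finally show ?thesis unfolding d_def .
qed


definition good :: "real \<Rightarrow> nat \<Rightarrow> nat \<Rightarrow> nat set set list \<Rightarrow> bool" where
  "good \<delta> u t gs \<longleftrightarrow> (\<forall>s<t. strong \<delta> u (gs ! s)) \<and> real (deg (gs ! t) u) < 5/4 * \<delta>"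

definition Fw :: "real \<Rightarrow> real \<Rightarrow> nat \<Rightarrow> nat \<Rightarrow> nat set set list \<Rightarrow> real" where
  "Fw \<delta> n u t gs = (if good \<delta> u t gs then (1/2) ^ deg (gs ! t) u / (1 - \<delta> / (64 * n)) ^ t else 0)"

lemma supermart:
  assumes V: "finite V" and G0: "simple_graph V E0"
    and dn: "\<delta> \<le> real (card V)" and d1: "1 \<le> \<delta>"
  shows "(\<integral>\<^sup>+gs. ennreal (Fw \<delta> (real (card V)) u t gs) \<partial>tri_traj V E0 t) \<le> ennreal ((1/2) ^ deg E0 u)"
proof (induction t)
  case 0
  show ?case by (simp add: Fw_def)
next
  case (Suc t)
  define n where "n = real (card V)"
  define r where "r = 1 - \<delta> / (64 * n)"
  have npos: "n > 0" using dn d1 n_def by linarith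
  have r0: "0 < r" "r \<le> 1" using dn d1 npos unfolding r_def n_def by (auto simp: field_simps)
  have inner: "(\<integral>\<^sup>+H. ennreal (Fw \<delta> n u (Suc t) (gs @ [H])) \<partial>tri_step V (last gs)) \<le> ennreal (Fw \<delta> n u t gs)"
    if gs: "gs \<in> set_pmf (tri_traj V E0 t)" for gs
  proof -
    from traj_support[OF V G0 gs] have len: "length gs = Suc t" and sg: "\<forall>G\<in>set gs. simple_graph V G" by auto
    define G where "G = last gs"
    have Gt: "gs ! t = G" unfolding G_def using len by (metis diff_Suc_1 last_conv_nth list.size(3) nat.distinct(1))
    have sG: "simple_graph V G" using sg len unfolding G_def by (metis last_in_set list.size(3) nat.distinct(1))
    have nth1: "(gs @ [H]) ! s = gs ! s" if "s \<le> t" for s H using that len by (simp add: nth_append)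
    have nth2: "(gs @ [H]) ! Suc t = H" for H using len by (simp add: nth_append)
    show ?thesis
    proof (cases "good \<delta> u t gs \<and> strong \<delta> u G")
      case True
      then have du: "real (deg G u) < 5/4 * \<delta>" and st: "strong \<delta> u G" using Gt unfolding good_def by auto
      have pw: "AE H in measure_pmf (tri_step V G). ennreal (Fw \<delta> n u (Suc t) (gs @ [H])) \<le> ennreal ((1/2) ^ deg H u / r ^ Suc t)"
        unfolding AE_measure_pmf_iff Fw_def r_def using nth2 r0 by (auto simp: r_def)
      have "(\<integral>\<^sup>+H. ennreal (Fw \<delta> n u (Suc t) (gs @ [H])) \<partial>tri_step V G) \<le> (\<integral>\<^sup>+H. ennreal ((1/2) ^ deg H u / r ^ Suc t) \<partial>tri_step V G)"
        by (rule nn_integral_mono_AE[OF pw])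
      also have "\<dots> = ennreal (\<integral>H. (1/2) ^ deg H u / r ^ Suc t \<partial>tri_step V G)"
      proof (rule nn_integral_eq_integral)
        have rp: "0 < r ^ Suc t" using r0 by simp
        show "integrable (measure_pmf (tri_step V G)) (\<lambda>H. (1/2::real) ^ deg H u / r ^ Suc t)"
        proof (rule pmf_integrable_bounded[where B="1 / r ^ Suc t"])
          fix H
          have "(1/2::real) ^ deg H u \<le> 1" by (simp add: power_le_one)
          then show "\<bar>(1/2::real) ^ deg H u / r ^ Suc t\<bar> \<le> 1 / r ^ Suc t"
            using rp by (simp add: divide_right_mono)
        qed
        show "AE H in measure_pmf (tri_step V G). 0 \<le> (1/2::real) ^ deg H u / r ^ Suc t"
          using rp by simp
      qed
      also have "(\<integral>H. (1/2::real) ^ deg H u / r ^ Suc t \<partial>tri_step V G) = (\<integral>H. (1/2::real) ^ deg H u \<partial>tri_step V G) / r ^ Suc t"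
        by simp
      also have "\<dots> \<le> (1/2) ^ deg G u * r / r ^ Suc t"
        using step_expect[OF sG V dn d1 du st] r0 unfolding r_def n_def by (intro divide_right_mono) auto
      also have "\<dots> = Fw \<delta> n u t gs"
      proof -
        have "Fw \<delta> n u t gs = (1/2) ^ deg G u / r ^ t" using True Gt unfolding Fw_def r_def by simp
        then show ?thesis using r0 by simp
      qed
      finally show ?thesis unfolding G_def by (simp add: ennreal_leI)
    next
      case False
      have "AE H in measure_pmf (tri_step V G). ennreal (Fw \<delta> n u (Suc t) (gs @ [H])) \<le> 0"
        unfolding AE_measure_pmf_iff
      proof
        fix H assume H: "H \<in> set_pmf (tri_step V G)"
        from step_support[OF V sG H] have "deg G u \<le> deg H u" using deg_mono by blast
        have "\<not> good \<delta> u (Suc t) (gs @ [H])"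
        proof
          assume g: "good \<delta> u (Suc t) (gs @ [H])"
          then have a: "\<forall>s<Suc t. strong \<delta> u ((gs @ [H]) ! s)" and b: "real (deg H u) < 5/4 * \<delta>"
            unfolding good_def using nth2 by auto
          have "\<forall>s<t. strong \<delta> u (gs ! s)"
          proof (intro allI impI)
            fix s assume "s < t"
            then have "strong \<delta> u ((gs @ [H]) ! s)" using a by auto
            then show "strong \<delta> u (gs ! s)" using nth1[of s H] \<open>s < t\<close> by simp
          qed
          moreover have "strong \<delta> u G" using a nth1[of t H] Gt by auto
          ultimately show False using b False \<open>deg G u \<le> deg H u\<close> Gt unfolding good_def by auto
        qed
        then show "ennreal (Fw \<delta> n u (Suc t) (gs @ [H])) \<le> 0" by (simp add: Fw_def)
      qed
      then have "(\<integral>\<^sup>+H. ennreal (Fw \<delta> n u (Suc t) (gs @ [H])) \<partial>tri_step V G) \<le> (\<integral>\<^sup>+H. 0 \<partial>tri_step V G)"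
        by (rule nn_integral_mono_AE)
      then show ?thesis unfolding G_def by simp
    qed
  qed
  have "(\<integral>\<^sup>+gs. ennreal (Fw \<delta> n u (Suc t) gs) \<partial>tri_traj V E0 (Suc t))
      = (\<integral>\<^sup>+gs. (\<integral>\<^sup>+H. ennreal (Fw \<delta> n u (Suc t) (gs @ [H])) \<partial>tri_step V (last gs)) \<partial>tri_traj V E0 t)"
    by (simp add: nn_integral_map_pmf)
  also have "\<dots> \<le> (\<integral>\<^sup>+gs. ennreal (Fw \<delta> n u t gs) \<partial>tri_traj V E0 t)"
    by (rule nn_integral_mono_AE) (use inner in \<open>auto simp: AE_measure_pmf_iff\<close>)
  also have "\<dots> \<le> ennreal ((1/2) ^ deg E0 u)" using Suc.IH unfolding n_def .
  finally show ?case unfolding n_def .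
qed


lemma half_pow: "(1/2::real) ^ k = exp (- (real k * ln 2))"
proof -
  have e: "exp (- ln 2) = (1/2::real)" by (simp add: exp_minus)
  have "(1/2::real) ^ k = exp (- ln 2) ^ k" by (simp only: e)
  also have "\<dots> = exp (real k * (- ln 2))" by (metis exp_of_nat_mult)
  finally show ?thesis by simp
qed

lemma deg_pos:
  assumes G: "simple_graph V E0" and c: "connected_graph V E0" and x: "x \<in> V" and y: "y \<in> V" "y \<noteq> x"
  shows "1 \<le> deg E0 x"
proof -
  have "(adj E0)\<^sup>*\<^sup>* x y" using c x y unfolding connected_graph_def by auto
  then obtain z where "adj E0 x z" using y(2) by (metis converse_rtranclpE)
  then have "z \<in> nbrs E0 x" by (simp add: nbrs_def)
  then show ?thesis unfolding deg_def using nbrs_finite[OF G]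
    by (metis One_nat_def Suc_leI card_gt_0_iff empty_iff)
qed

lemma deg_le_card: "simple_graph V G \<Longrightarrow> finite V \<Longrightarrow> deg G x \<le> card V"
  unfolding deg_def by (intro card_mono nbrs_sub) auto

theorem lemma5:
  "\<exists>C::real. C > 0 \<and>
     (\<forall>(V::nat set) (E0::nat set set) (u::nat).
        finite V \<and> card V \<ge> 2 \<and> simple_graph V E0 \<and> connected_graph V E0 \<and> u \<in> V \<longrightarrow>
        (let n = card V; \<delta>0 = real (min_deg V E0); T = nat \<lceil>C * real n * ln (real n)\<rceil> in
          measure_pmf.prob (tri_traj V E0 T)
            {gs. (\<forall>t<T. real (card {x \<in> Nset (gs ! t) u 1.
                               real (deg_in (gs ! t) x (Nset (gs ! t) u 2)) \<ge> \<delta>0 / 2}) > \<delta>0 / 4)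
                 \<and> real (deg (gs ! T) u) < 5 / 4 * \<delta>0}
          \<le> 1 / real n ^ 2))"
proof (rule exI[of _ 192], intro conjI allI impI)
  fix V :: "nat set" and E0 u
  assume A: "finite V \<and> card V \<ge> 2 \<and> simple_graph V E0 \<and> connected_graph V E0 \<and> u \<in> V"
  then have V: "finite V" and n2: "card V \<ge> 2" and G0: "simple_graph V E0"
    and con: "connected_graph V E0" and u: "u \<in> V" by auto
  define n where "n = card V"
  define \<delta> where "\<delta> = real (min_deg V E0)"
  define T where "T = nat \<lceil>192 * real n * ln (real n)\<rceil>"
  define E where "E = {gs. (\<forall>t<T. real (card {x \<in> Nset (gs ! t) u 1.
                               real (deg_in (gs ! t) x (Nset (gs ! t) u 2)) \<ge> \<delta> / 2}) > \<delta> / 4)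
                 \<and> real (deg (gs ! T) u) < 5 / 4 * \<delta>}"
  have Vne: "V \<noteq> {}" using u by auto
  have allpos: "\<forall>x\<in>V. 1 \<le> deg E0 x"
  proof
    fix x assume x: "x \<in> V"
    have "\<exists>y\<in>V. y \<noteq> x"
    proof (rule ccontr)
      assume "\<not> (\<exists>y\<in>V. y \<noteq> x)"
      then have "V \<subseteq> {x}" by auto
      then have "card V \<le> 1" using card_mono[of "{x}" V] by auto
      then show False using n2 by simp
    qed
    then show "1 \<le> deg E0 x" using deg_pos[OF G0 con x] by blast
  qed
  have d1: "1 \<le> \<delta>" unfolding \<delta>_def min_deg_def using allpos V Vne
    by (simp add: Min_ge_iff)
  have du0: "\<delta> \<le> real (deg E0 u)" unfolding \<delta>_def min_deg_def using V u by simp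
  have dn: "\<delta> \<le> real (card V)" using du0 deg_le_card[OF G0 V, of u] by linarith
  have npos: "real n \<ge> 2" using n2 n_def by simp
  define r where "r = 1 - \<delta> / (64 * real n)"
  have r0: "0 < r" "r \<le> 1" using dn d1 npos unfolding r_def n_def by (auto simp: field_simps)
  define c where "c = exp (- (5/4 * \<delta> * ln 2)) / r ^ T"
  have c0: "c \<ge> 0" using r0 unfolding c_def by simp
  have Egood: "E = {gs. good \<delta> u T gs}" unfolding E_def good_def strong_def by simp
  have pw: "ennreal c * indicator E gs \<le> ennreal (Fw \<delta> (real (card V)) u T gs)" for gs
  proof (cases "gs \<in> E")
    case True
    then have g: "good \<delta> u T gs" using Egood by simp
    then have k: "real (deg (gs ! T) u) < 5/4 * \<delta>" unfolding good_def by simp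
    have "exp (- (5/4 * \<delta> * ln 2)) \<le> (1/2) ^ deg (gs ! T) u"
      unfolding half_pow using k by simp
    then have "c \<le> Fw \<delta> (real (card V)) u T gs"
      using g r0 unfolding c_def Fw_def r_def n_def by (simp add: divide_right_mono)
    then show ?thesis using True by (simp add: ennreal_leI)
  qed simp
  have "ennreal c * emeasure (measure_pmf (tri_traj V E0 T)) E
      = (\<integral>\<^sup>+gs. ennreal c * indicator E gs \<partial>tri_traj V E0 T)"
    by (rule nn_integral_cmult_indicator[symmetric]) simp
  also have "\<dots> \<le> (\<integral>\<^sup>+gs. ennreal (Fw \<delta> (real (card V)) u T gs) \<partial>tri_traj V E0 T)"
    by (rule nn_integral_mono) (rule pw)
  also have "\<dots> \<le> ennreal ((1/2) ^ deg E0 u)" by (rule supermart[OF V G0 dn d1])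
  finally have "ennreal (c * measure_pmf.prob (tri_traj V E0 T) E) \<le> ennreal ((1/2) ^ deg E0 u)"
    using c0 by (simp add: measure_pmf.emeasure_eq_measure ennreal_mult)
  then have P1: "c * measure_pmf.prob (tri_traj V E0 T) E \<le> (1/2) ^ deg E0 u"
    by (simp add: ennreal_le_iff)
  have h0: "(1/2::real) ^ deg E0 u \<le> exp (- (\<delta> * ln 2))" unfolding half_pow using du0 by simp
  have rT: "r ^ T \<le> exp (- (real T * (\<delta> / (64 * real n))))"
  proof -
    have "r \<le> exp (- (\<delta> / (64 * real n)))" unfolding r_def using exp_ge_add_one_self[of "- (\<delta> / (64 * real n))"] by simp
    then have "r ^ T \<le> exp (- (\<delta> / (64 * real n))) ^ T" using r0 by (intro power_mono) auto
    also have "\<dots> = exp (real T * (- (\<delta> / (64 * real n))))" by (metis exp_of_nat_mult)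
    finally show ?thesis by simp
  qed
  have lnn: "ln (real n) \<ge> ln 2" using npos by simp
  have ln2: "ln (2::real) > 0" by simp
  have Tge: "real T \<ge> 192 * real n * ln (real n)"
  proof -
    have "0 \<le> 192 * real n * ln (real n)" using npos lnn ln2 by simp
    then show ?thesis unfolding T_def by linarith
  qed
  have "real T * (\<delta> / (64 * real n)) \<ge> 192 * real n * ln (real n) * (\<delta> / (64 * real n))"
    using Tge d1 npos by (intro mult_right_mono) auto
  then have Tb: "real T * (\<delta> / (64 * real n)) \<ge> 3 * \<delta> * ln (real n)" using npos by (simp add: field_simps)
  have "measure_pmf.prob (tri_traj V E0 T) E \<le> (1/2) ^ deg E0 u / c"
    using P1 c0 r0 unfolding c_def by (simp add: field_simps)
  also have "\<dots> \<le> exp (- (\<delta> * ln 2)) / c" using h0 c0 by (intro divide_right_mono) auto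
  also have "\<dots> = exp (\<delta> * ln 2 / 4) * r ^ T"
    unfolding c_def using r0 by (simp add: exp_minus field_simps flip: exp_add)
  also have "\<dots> \<le> exp (\<delta> * ln 2 / 4) * exp (- (3 * \<delta> * ln (real n)))"
    using rT Tb by (intro mult_left_mono) (auto intro: order_trans)
  also have "\<dots> = exp (\<delta> * ln 2 / 4 - 3 * \<delta> * ln (real n))" by (simp add: exp_add[symmetric])
  also have "\<dots> \<le> exp (- (2 * ln (real n)))"
  proof -
    have "\<delta> * ln 2 \<le> \<delta> * ln (real n)" using lnn d1 by (intro mult_left_mono) auto
    moreover have "ln (real n) \<le> \<delta> * ln (real n)"
    proof -
      have "0 \<le> ln (real n)" using lnn ln2 by linarith
      from mult_right_mono[OF d1 this] show ?thesis by simp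
    qed
    moreover have "0 \<le> \<delta> * ln 2" using d1 ln2 by simp
    ultimately show ?thesis by simp
  qed
  also have "\<dots> = 1 / real n ^ 2"
  proof -
    have "exp (2 * ln (real n)) = exp (ln (real n)) ^ 2" by (metis exp_of_nat_mult of_nat_numeral)
    also have "\<dots> = real n ^ 2" using npos by simp
    finally show ?thesis by (simp add: exp_minus divide_inverse)
  qed
  finally show "let n = card V; \<delta>0 = real (min_deg V E0); T = nat \<lceil>192 * real n * ln (real n)\<rceil> in
          measure_pmf.prob (tri_traj V E0 T)
            {gs. (\<forall>t<T. real (card {x \<in> Nset (gs ! t) u 1.
                               real (deg_in (gs ! t) x (Nset (gs ! t) u 2)) \<ge> \<delta>0 / 2}) > \<delta>0 / 4)
                 \<and> real (deg (gs ! T) u) < 5 / 4 * \<delta>0}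
          \<le> 1 / real n ^ 2"
    unfolding Let_def E_def T_def \<delta>_def n_def .
qed simp

end
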